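(* Let $L, H \in \mathcal{L}$, $\gamma \in Z^1(L,T)$, $\sigma \in Z^1(H,T)$ and $g \in S$. Then $C_L(\gamma)^g \leq C_H(\sigma)$ if and only if $L^g \leq H$ and $\sigma^g_L - \gamma = \zeta_{L,H,g}$ (as maps $L \to T$).
   Context: Conventions: for a group $G$ acting on the right on an additive abelian group $M$, $Z^n(G,M)$, $B^n(G,M)$ are normalised cocycles and coboundaries; for $\tau \in Z^2(G,M)$, $\mathrm{Ext}(\tau)$ is $G\times M$ with $(g,m)(h,n) = (gh, m^h+n+\tau(g,h))$. Setting: $S$ is an infinite pro-$p$-group of finite coclass, $T = \gamma_\ell(S)$ ($\ell$ large) with $T \cong \mathbb{Z}_p^d$, $P = S/T$ a finite $p$-group, the series $T_0=T$, $T_{i+1} = [T_i,S]$ having all indices $p$. $T$ is an additive $P$-module via conjugation, $S = \mathrm{Ext}(\rho)$ for some $\rho \in Z^2(P,T)$, $\epsilon: S\to P$ the projection, $T$ identified with $\{(1,t)\}$; elements of $S$ act on $P$ and $T$ through their image in $P$, and $L^g$ denotes conjugation by $\epsilon(g)$. For $L \leq P$, $\overline{L} = \epsilon^{-1}(L)$. $\mathcal{L}$ is the set of elementary abelian $L \leq P$ with $\rho_L \in B^2(L,T)$. For $L \in \mathcal{L}$ a complement $C_L = \{c_L(l)\}$ to $T$ in $\overline{L}$ is fixed, $c_L(l) = (l,t_L(l))$, and for $\delta \in Z^1(L,T)$, $C_L(\delta) = \{(l,t_L(l)+\delta(l)) \mid l\in L\}$. For $L,H\in\mathcal{L}$ and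 $g \in S$ with $L^g \leq H$ define $\zeta_{L,H,g}: L \to S$, $l \mapsto (c_H(l^g)^{-1})^{g^{-1}} \cdot c_L(l)$, and for $\sigma \in Z^1(H,T)$ define $\sigma^g_L : L \to T$, $l \mapsto \sigma(l^g)^{g^{-1}}$ (an element of $Z^1(L,T)$). Equalities of maps into $T$ with maps into $S$ use the identification $t \leftrightarrow (1,t)$. *)

theory Defs
  imports "HOL-Algebra.Algebra"
begin

text \<open>An additive abelian group (the type 'b) with a right action of the group P:
  act m g stands for m^g.\<close>
definition right_action :: "('a,'c) monoid_scheme \<Rightarrow> ('b::ab_group_add \<Rightarrow> 'a \<Rightarrow> 'b) \<Rightarrow> bool" where
  "right_action P act \<longleftrightarrow>
     (\<forall>m. act m \<one>\<^bsub>P\<^esub> = m) \<and>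
     (\<forall>m g h. g \<in> carrier P \<longrightarrow> h \<in> carrier P \<longrightarrow> act (act m g) h = act m (g \<otimes>\<^bsub>P\<^esub> h)) \<and>
     (\<forall>m n g. g \<in> carrier P \<longrightarrow> act (m + n) g = act m g + act n g)"

definition Z2 :: "('a,'c) monoid_scheme \<Rightarrow> ('b::ab_group_add \<Rightarrow> 'a \<Rightarrow> 'b) \<Rightarrow> ('a \<Rightarrow> 'a \<Rightarrow> 'b) \<Rightarrow> bool" where
  "Z2 P act \<tau> \<longleftrightarrow>
     (\<forall>g\<in>carrier P. \<tau> \<one>\<^bsub>P\<^esub> g = 0 \<and> \<tau> g \<one>\<^bsub>P\<^esub> = 0) \<and>
     (\<forall>g\<in>carrier P. \<forall>h\<in>carrier P. \<forall>k\<in>carrier P.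
        act (\<tau> g h) k + \<tau> (g \<otimes>\<^bsub>P\<^esub> h) k = \<tau> g (h \<otimes>\<^bsub>P\<^esub> k) + \<tau> h k)"

definition Z1 :: "('a,'c) monoid_scheme \<Rightarrow> ('b::ab_group_add \<Rightarrow> 'a \<Rightarrow> 'b) \<Rightarrow> 'a set \<Rightarrow> ('a \<Rightarrow> 'b) \<Rightarrow> bool" where
  "Z1 P act L \<delta> \<longleftrightarrow> (\<forall>l\<in>L. \<forall>h\<in>L. \<delta> (l \<otimes>\<^bsub>P\<^esub> h) = act (\<delta> l) h + \<delta> h)"

definition B2 :: "('a,'c) monoid_scheme \<Rightarrow> ('b::ab_group_add \<Rightarrow> 'a \<Rightarrow> 'b) \<Rightarrow> 'a set \<Rightarrow> ('a \<Rightarrow> 'a \<Rightarrow> 'b) \<Rightarrow> bool" where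
  "B2 P act L \<tau> \<longleftrightarrow> (\<exists>\<beta>. \<beta> \<one>\<^bsub>P\<^esub> = 0 \<and>
       (\<forall>l\<in>L. \<forall>h\<in>L. \<tau> l h = act (\<beta> l) h + \<beta> h - \<beta> (l \<otimes>\<^bsub>P\<^esub> h)))"

definition Ext :: "('a,'c) monoid_scheme \<Rightarrow> ('b::ab_group_add \<Rightarrow> 'a \<Rightarrow> 'b) \<Rightarrow> ('a \<Rightarrow> 'a \<Rightarrow> 'b) \<Rightarrow> ('a \<times> 'b) monoid" where
  "Ext P act \<tau> = \<lparr>carrier = carrier P \<times> UNIV,
      monoid.mult = (\<lambda>x y. (fst x \<otimes>\<^bsub>P\<^esub> fst y, act (snd x) (fst y) + snd y + \<tau> (fst x) (fst y))),
      one = (\<one>\<^bsub>P\<^esub>, 0)\<rparr>"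

definition elem_abelian :: "('a,'c) monoid_scheme \<Rightarrow> nat \<Rightarrow> 'a set \<Rightarrow> bool" where
  "elem_abelian P p L \<longleftrightarrow> subgroup L P \<and> (\<forall>x\<in>L. \<forall>y\<in>L. x \<otimes>\<^bsub>P\<^esub> y = y \<otimes>\<^bsub>P\<^esub> x)
      \<and> (\<forall>x\<in>L. x [^]\<^bsub>P\<^esub> p = \<one>\<^bsub>P\<^esub>)"

definition calL :: "('a,'c) monoid_scheme \<Rightarrow> ('b::ab_group_add \<Rightarrow> 'a \<Rightarrow> 'b) \<Rightarrow> ('a \<Rightarrow> 'a \<Rightarrow> 'b) \<Rightarrow> nat \<Rightarrow> 'a set set" where
  "calL P act \<rho> p = {L. elem_abelian P p L \<and> B2 P act L \<rho>}"

text \<open>C_L(\<delta>) = {(l, t_L(l) + \<delta>(l)) | l \<in> L}; the complement C_L is C_L(0).\<close>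
definition CLd :: "'a set \<Rightarrow> ('a \<Rightarrow> 'b::ab_group_add) \<Rightarrow> ('a \<Rightarrow> 'b) \<Rightarrow> ('a \<times> 'b) set" where
  "CLd L t \<delta> = {(l, t l + \<delta> l) | l. l \<in> L}"

definition conjg :: "('x,'c) monoid_scheme \<Rightarrow> 'x \<Rightarrow> 'x \<Rightarrow> 'x" where
  "conjg G x g = inv\<^bsub>G\<^esub> g \<otimes>\<^bsub>G\<^esub> x \<otimes>\<^bsub>G\<^esub> g"

text \<open>\<zeta>_{L,H,g}(l) = (c_H(l^g)^{-1})^{g^{-1}} c_L(l), where c_L(l) = (l, t_L(l)),
  and l^g is conjugation in P by \<epsilon>(g) = fst g.\<close>
definition zeta :: "('a,'c) monoid_scheme \<Rightarrow> ('b::ab_group_add \<Rightarrow> 'a \<Rightarrow> 'b) \<Rightarrow> ('a \<Rightarrow> 'a \<Rightarrow> 'b)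
     \<Rightarrow> ('a \<Rightarrow> 'b) \<Rightarrow> ('a \<Rightarrow> 'b) \<Rightarrow> ('a \<times> 'b) \<Rightarrow> 'a \<Rightarrow> ('a \<times> 'b)" where
  "zeta P act \<rho> tL tH g l =
     (let S = Ext P act \<rho>; lg = conjg P l (fst g) in
      conjg S (inv\<^bsub>S\<^esub> (lg, tH lg)) (inv\<^bsub>S\<^esub> g) \<otimes>\<^bsub>S\<^esub> (l, tL l))"

definition twist :: "('a,'c) monoid_scheme \<Rightarrow> ('b::ab_group_add \<Rightarrow> 'a \<Rightarrow> 'b) \<Rightarrow> ('a \<Rightarrow> 'b) \<Rightarrow> ('a \<times> 'b) \<Rightarrow> 'a \<Rightarrow> 'b" where
  "twist P act \<sigma> g l = act (\<sigma> (conjg P l (fst g))) (inv\<^bsub>P\<^esub> (fst g))"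

end

theory Submission
  imports Defs
begin

lemma ra_one: "right_action P act \<Longrightarrow> act m \<one>\<^bsub>P\<^esub> = m"
  unfolding right_action_def by blast
lemma ra_comp: "right_action P act \<Longrightarrow> g \<in> carrier P \<Longrightarrow> h \<in> carrier P \<Longrightarrow> act (act m g) h = act m (g \<otimes>\<^bsub>P\<^esub> h)"
  unfolding right_action_def by blast
lemma ra_add: "right_action P act \<Longrightarrow> g \<in> carrier P \<Longrightarrow> act (m + n) g = act m g + act n g"
  unfolding right_action_def by blast
lemma ra_zero: "right_action P act \<Longrightarrow> g \<in> carrier P \<Longrightarrow> act 0 g = 0"
  using ra_add[of P act g 0 0] by simp
lemma ra_minus: "right_action P act \<Longrightarrow> g \<in> carrier P \<Longrightarrow> act (- m) g = - act m g"
  using ra_add[of P act g m "-m"] ra_zero[of P act g] by (simp add: minus_unique)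

lemma Ext_mult: "x \<otimes>\<^bsub>Ext P act \<tau>\<^esub> y = (fst x \<otimes>\<^bsub>P\<^esub> fst y, act (snd x) (fst y) + snd y + \<tau> (fst x) (fst y))"
  by (simp add: Ext_def)
lemma Ext_one: "\<one>\<^bsub>Ext P act \<tau>\<^esub> = (\<one>\<^bsub>P\<^esub>, 0)"
  by (simp add: Ext_def)
lemma Ext_carrier: "carrier (Ext P act \<tau>) = carrier P \<times> UNIV"
  by (simp add: Ext_def)

lemma Ext_group:
  assumes G: "group P" and A: "right_action P act" and Z: "Z2 P act \<tau>"
  shows "group (Ext P act \<tau>)"
proof (rule groupI)
  interpret P: group P by (rule G)
  show "\<And>x y. x \<in> carrier (Ext P act \<tau>) \<Longrightarrow> y \<in> carrier (Ext P act \<tau>) \<Longrightarrow>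
     x \<otimes>\<^bsub>Ext P act \<tau>\<^esub> y \<in> carrier (Ext P act \<tau>)"
    by (auto simp: Ext_mult Ext_carrier)
  show "\<one>\<^bsub>Ext P act \<tau>\<^esub> \<in> carrier (Ext P act \<tau>)"
    by (auto simp: Ext_one Ext_carrier)
  show "\<And>x y z. x \<in> carrier (Ext P act \<tau>) \<Longrightarrow> y \<in> carrier (Ext P act \<tau>) \<Longrightarrow> z \<in> carrier (Ext P act \<tau>) \<Longrightarrow>
     x \<otimes>\<^bsub>Ext P act \<tau>\<^esub> y \<otimes>\<^bsub>Ext P act \<tau>\<^esub> z = x \<otimes>\<^bsub>Ext P act \<tau>\<^esub> (y \<otimes>\<^bsub>Ext P act \<tau>\<^esub> z)"
  proof -
    fix x y z assume "x \<in> carrier (Ext P act \<tau>)" "y \<in> carrier (Ext P act \<tau>)" "z \<in> carrier (Ext P act \<tau>)"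
    then obtain a m b n c k where xyz: "x = (a,m)" "y = (b,n)" "z = (c,k)" and
      c: "a \<in> carrier P" "b \<in> carrier P" "c \<in> carrier P" by (auto simp: Ext_carrier)
    have coc: "act (\<tau> a b) c + \<tau> (a \<otimes>\<^bsub>P\<^esub> b) c = \<tau> a (b \<otimes>\<^bsub>P\<^esub> c) + \<tau> b c"
      using Z c unfolding Z2_def by blast
    have "act (act m b + n + \<tau> a b) c + k + \<tau> (a \<otimes>\<^bsub>P\<^esub> b) c
        = act m (b \<otimes>\<^bsub>P\<^esub> c) + act n c + k + (act (\<tau> a b) c + \<tau> (a \<otimes>\<^bsub>P\<^esub> b) c)"
      using c by (simp add: ra_add[OF A] ra_comp[OF A] algebra_simps)
    also have "\<dots> = act m (b \<otimes>\<^bsub>P\<^esub> c) + (act n c + k + \<tau> b c) + \<tau> a (b \<otimes>\<^bsub>P\<^esub> c)"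
      using coc by (simp add: algebra_simps)
    finally show "x \<otimes>\<^bsub>Ext P act \<tau>\<^esub> y \<otimes>\<^bsub>Ext P act \<tau>\<^esub> z = x \<otimes>\<^bsub>Ext P act \<tau>\<^esub> (y \<otimes>\<^bsub>Ext P act \<tau>\<^esub> z)"
      using c by (simp add: xyz Ext_mult P.m_assoc)
  qed
  show "\<And>x. x \<in> carrier (Ext P act \<tau>) \<Longrightarrow> \<one>\<^bsub>Ext P act \<tau>\<^esub> \<otimes>\<^bsub>Ext P act \<tau>\<^esub> x = x"
    using Z A by (auto simp: Ext_mult Ext_one Ext_carrier Z2_def ra_zero)
  show "\<And>x. x \<in> carrier (Ext P act \<tau>) \<Longrightarrow> \<exists>y\<in>carrier (Ext P act \<tau>). y \<otimes>\<^bsub>Ext P act \<tau>\<^esub> x = \<one>\<^bsub>Ext P act \<tau>\<^esub>"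
  proof -
    fix x assume "x \<in> carrier (Ext P act \<tau>)"
    then obtain a m where x: "x = (a,m)" and a: "a \<in> carrier P" by (auto simp: Ext_carrier)
    define k where "k = - act (m + \<tau> (inv\<^bsub>P\<^esub> a) a) (inv\<^bsub>P\<^esub> a)"
    have "act k a = - (m + \<tau> (inv\<^bsub>P\<^esub> a) a)"
      using a by (simp add: k_def ra_minus[OF A] ra_comp[OF A] ra_one[OF A])
    then have "act k a + m + \<tau> (inv\<^bsub>P\<^esub> a) a = 0" by simp
    then show "\<exists>y\<in>carrier (Ext P act \<tau>). y \<otimes>\<^bsub>Ext P act \<tau>\<^esub> x = \<one>\<^bsub>Ext P act \<tau>\<^esub>"
      using a by (intro bexI[of _ "(inv\<^bsub>P\<^esub> a, k)"]) (auto simp: x Ext_mult Ext_one Ext_carrier)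
  qed
qed

lemma grp_key:
  assumes "group G" and c: "g \<in> carrier G" "c \<in> carrier G" "cL \<in> carrier G" "s \<in> carrier G" "r \<in> carrier G"
    and w: "w = g \<otimes>\<^bsub>G\<^esub> s \<otimes>\<^bsub>G\<^esub> inv\<^bsub>G\<^esub> g"
  shows "(inv\<^bsub>G\<^esub> g \<otimes>\<^bsub>G\<^esub> (cL \<otimes>\<^bsub>G\<^esub> r) \<otimes>\<^bsub>G\<^esub> g = c \<otimes>\<^bsub>G\<^esub> s) \<longleftrightarrow>
         (w \<otimes>\<^bsub>G\<^esub> inv\<^bsub>G\<^esub> r = g \<otimes>\<^bsub>G\<^esub> inv\<^bsub>G\<^esub> c \<otimes>\<^bsub>G\<^esub> inv\<^bsub>G\<^esub> g \<otimes>\<^bsub>G\<^esub> cL)"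
proof -
  interpret G: group G by fact
  have "(inv\<^bsub>G\<^esub> g \<otimes>\<^bsub>G\<^esub> (cL \<otimes>\<^bsub>G\<^esub> r) \<otimes>\<^bsub>G\<^esub> g = c \<otimes>\<^bsub>G\<^esub> s) \<longleftrightarrow>
        (g \<otimes>\<^bsub>G\<^esub> inv\<^bsub>G\<^esub> c \<otimes>\<^bsub>G\<^esub> inv\<^bsub>G\<^esub> g \<otimes>\<^bsub>G\<^esub> (g \<otimes>\<^bsub>G\<^esub> (inv\<^bsub>G\<^esub> g \<otimes>\<^bsub>G\<^esub> (cL \<otimes>\<^bsub>G\<^esub> r) \<otimes>\<^bsub>G\<^esub> g) \<otimes>\<^bsub>G\<^esub> inv\<^bsub>G\<^esub> g) \<otimes>\<^bsub>G\<^esub> inv\<^bsub>G\<^esub> r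
        = g \<otimes>\<^bsub>G\<^esub> inv\<^bsub>G\<^esub> c \<otimes>\<^bsub>G\<^esub> inv\<^bsub>G\<^esub> g \<otimes>\<^bsub>G\<^esub> (g \<otimes>\<^bsub>G\<^esub> (c \<otimes>\<^bsub>G\<^esub> s) \<otimes>\<^bsub>G\<^esub> inv\<^bsub>G\<^esub> g) \<otimes>\<^bsub>G\<^esub> inv\<^bsub>G\<^esub> r)"
    (is "?A \<longleftrightarrow> ?B")
  proof
    assume ?A then show ?B by simp
  next
    assume B: ?B
    define u where "u = g \<otimes>\<^bsub>G\<^esub> inv\<^bsub>G\<^esub> c \<otimes>\<^bsub>G\<^esub> inv\<^bsub>G\<^esub> g"
    define A1 where "A1 = inv\<^bsub>G\<^esub> g \<otimes>\<^bsub>G\<^esub> (cL \<otimes>\<^bsub>G\<^esub> r) \<otimes>\<^bsub>G\<^esub> g"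
    define A2 where "A2 = c \<otimes>\<^bsub>G\<^esub> s"
    have uc: "u \<in> carrier G" and a1: "A1 \<in> carrier G" and a2: "A2 \<in> carrier G"
      using c by (auto simp: u_def A1_def A2_def)
    have "u \<otimes>\<^bsub>G\<^esub> (g \<otimes>\<^bsub>G\<^esub> A1 \<otimes>\<^bsub>G\<^esub> inv\<^bsub>G\<^esub> g) \<otimes>\<^bsub>G\<^esub> inv\<^bsub>G\<^esub> r
        = u \<otimes>\<^bsub>G\<^esub> (g \<otimes>\<^bsub>G\<^esub> A2 \<otimes>\<^bsub>G\<^esub> inv\<^bsub>G\<^esub> g) \<otimes>\<^bsub>G\<^esub> inv\<^bsub>G\<^esub> r"
      using B by (simp only: u_def A1_def A2_def)
    then have "u \<otimes>\<^bsub>G\<^esub> (g \<otimes>\<^bsub>G\<^esub> A1 \<otimes>\<^bsub>G\<^esub> inv\<^bsub>G\<^esub> g) = u \<otimes>\<^bsub>G\<^esub> (g \<otimes>\<^bsub>G\<^esub> A2 \<otimes>\<^bsub>G\<^esub> inv\<^bsub>G\<^esub> g)"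
      using c uc a1 a2 G.r_cancel by (meson G.inv_closed G.m_closed)
    then have "g \<otimes>\<^bsub>G\<^esub> A1 \<otimes>\<^bsub>G\<^esub> inv\<^bsub>G\<^esub> g = g \<otimes>\<^bsub>G\<^esub> A2 \<otimes>\<^bsub>G\<^esub> inv\<^bsub>G\<^esub> g"
      using c uc a1 a2 G.l_cancel by (meson G.inv_closed G.m_closed)
    then have "g \<otimes>\<^bsub>G\<^esub> A1 = g \<otimes>\<^bsub>G\<^esub> A2"
      using c uc a1 a2 G.r_cancel by (meson G.inv_closed G.m_closed)
    then have "A1 = A2"
      using c uc a1 a2 G.l_cancel by (meson G.inv_closed G.m_closed)
    then show ?A by (simp only: A1_def A2_def)
  qed
  also have "?B \<longleftrightarrow> (g \<otimes>\<^bsub>G\<^esub> inv\<^bsub>G\<^esub> c \<otimes>\<^bsub>G\<^esub> inv\<^bsub>G\<^esub> g \<otimes>\<^bsub>G\<^esub> cL = w \<otimes>\<^bsub>G\<^esub> inv\<^bsub>G\<^esub> r)"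
    using c by (simp add: w G.m_assoc G.inv_solve_left')
  finally show ?thesis by auto
qed

theorem theorem3p2:
  fixes P :: "('a,'c) monoid_scheme" and act :: "'b::ab_group_add \<Rightarrow> 'a \<Rightarrow> 'b"
    and \<rho> :: "'a \<Rightarrow> 'a \<Rightarrow> 'b" and p :: nat
    and L H :: "'a set" and tL tH \<gamma> \<sigma> :: "'a \<Rightarrow> 'b" and g :: "'a \<times> 'b"
  assumes "group P" and "finite (carrier P)" and "Factorial_Ring.prime p" and "\<exists>k. card (carrier P) = p ^ k"
    and "right_action P act" and "Z2 P act \<rho>"
    and "L \<in> calL P act \<rho> p" and "H \<in> calL P act \<rho> p"
    and "subgroup (CLd L tL (\<lambda>_. 0)) (Ext P act \<rho>)"
    and "subgroup (CLd H tH (\<lambda>_. 0)) (Ext P act \<rho>)"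
    and "Z1 P act L \<gamma>" and "Z1 P act H \<sigma>"
    and "g \<in> carrier (Ext P act \<rho>)"
  shows "(\<lambda>x. conjg (Ext P act \<rho>) x g) ` CLd L tL \<gamma> \<subseteq> CLd H tH \<sigma>
     \<longleftrightarrow> ((\<lambda>l. conjg P l (fst g)) ` L \<subseteq> H \<and>
          (\<forall>l\<in>L. (\<one>\<^bsub>P\<^esub>, twist P act \<sigma> g l - \<gamma> l) = zeta P act \<rho> tL tH g l))"
proof -
  note A = \<open>right_action P act\<close> and Z = \<open>Z2 P act \<rho>\<close>
  interpret P: group P by fact
  define S where "S = Ext P act \<rho>"
  interpret S: group S unfolding S_def by (rule Ext_group[OF \<open>group P\<close> A Z])
  have Lsub: "L \<subseteq> carrier P" using assms(7) by (auto simp: calL_def elem_abelian_def dest: subgroup.subset)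
  have gc: "g \<in> carrier S" and fg: "fst g \<in> carrier P" using assms(13) by (auto simp: S_def Ext_carrier)
  have carS: "\<And>x. x \<in> carrier S \<longleftrightarrow> fst x \<in> carrier P" by (auto simp: S_def Ext_carrier)
  have fmult: "\<And>x y. fst (x \<otimes>\<^bsub>S\<^esub> y) = fst x \<otimes>\<^bsub>P\<^esub> fst y" by (simp add: S_def Ext_mult)
  have finv: "\<And>x. x \<in> carrier S \<Longrightarrow> fst (inv\<^bsub>S\<^esub> x) = inv\<^bsub>P\<^esub> fst x"
  proof -
    fix x assume x: "x \<in> carrier S"
    have "fst (x \<otimes>\<^bsub>S\<^esub> inv\<^bsub>S\<^esub> x) = \<one>\<^bsub>P\<^esub>" using S.r_inv[OF x] by (simp add: S_def Ext_one)
    then have "fst x \<otimes>\<^bsub>P\<^esub> fst (inv\<^bsub>S\<^esub> x) = \<one>\<^bsub>P\<^esub>" by (simp add: fmult)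
    moreover have "fst (inv\<^bsub>S\<^esub> x) \<in> carrier P" using x carS by blast
    ultimately show "fst (inv\<^bsub>S\<^esub> x) = inv\<^bsub>P\<^esub> fst x" using x carS
      by (metis P.inv_equality P.inv_inv P.inv_closed P.r_inv P.l_cancel)
  qed
  define e where "e t = (\<one>\<^bsub>P\<^esub>, t)" for t :: 'b
  have ec: "\<And>t. e t \<in> carrier S" by (simp add: e_def carS)
  have rho1: "\<And>a. a \<in> carrier P \<Longrightarrow> \<rho> \<one>\<^bsub>P\<^esub> a = 0 \<and> \<rho> a \<one>\<^bsub>P\<^esub> = 0" using Z by (simp add: Z2_def)
  have ee: "\<And>s t. e s \<otimes>\<^bsub>S\<^esub> e t = e (s + t)"
    using rho1[of "\<one>\<^bsub>P\<^esub>"] by (simp add: e_def S_def Ext_mult ra_one[OF A])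
  have einv: "\<And>t. inv\<^bsub>S\<^esub> e t = e (- t)"
    using ee ec by (metis S.inv_equality add.right_inverse S_def Ext_one e_def S.r_inv S.inv_closed S.l_inv ab_left_minus)
  have ye: "\<And>y t. y \<in> carrier S \<Longrightarrow> y \<otimes>\<^bsub>S\<^esub> e t = (fst y, snd y + t)"
    using rho1 carS by (simp add: e_def S_def Ext_mult ra_one[OF A])
  have econj: "\<And>h t. h \<in> carrier S \<Longrightarrow> inv\<^bsub>S\<^esub> h \<otimes>\<^bsub>S\<^esub> e t \<otimes>\<^bsub>S\<^esub> h = e (act t (fst h))"
  proof -
    fix h t assume h: "h \<in> carrier S"
    have "e t \<otimes>\<^bsub>S\<^esub> h = h \<otimes>\<^bsub>S\<^esub> e (act t (fst h))"
      using h rho1 carS by (simp add: e_def S_def Ext_mult ra_one[OF A] ye add.commute)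
    then show "inv\<^bsub>S\<^esub> h \<otimes>\<^bsub>S\<^esub> e t \<otimes>\<^bsub>S\<^esub> h = e (act t (fst h))"
      using h ec by (metis S.inv_closed S.l_inv S.l_one S.m_assoc)
  qed
  have memH: "\<And>y. y \<in> carrier S \<Longrightarrow> y \<in> CLd H tH \<sigma> \<longleftrightarrow> fst y \<in> H \<and> y = (fst y, tH (fst y)) \<otimes>\<^bsub>S\<^esub> e (\<sigma> (fst y))"
  proof -
    fix y :: "'a \<times> 'b" assume y: "y \<in> carrier S"
    have "(fst y, tH (fst y)) \<in> carrier S" using y carS by simp
    then show "y \<in> CLd H tH \<sigma> \<longleftrightarrow> fst y \<in> H \<and> y = (fst y, tH (fst y)) \<otimes>\<^bsub>S\<^esub> e (\<sigma> (fst y))"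
      by (subst ye) (auto simp: CLd_def prod_eq_iff)
  qed
  have key: "conjg S (l, tL l + \<gamma> l) g \<in> CLd H tH \<sigma> \<longleftrightarrow>
      conjg P l (fst g) \<in> H \<and> (\<one>\<^bsub>P\<^esub>, twist P act \<sigma> g l - \<gamma> l) = zeta P act \<rho> tL tH g l"
    if l: "l \<in> L" for l
  proof -
    have lc: "l \<in> carrier P" using l Lsub by blast
    define lg where "lg = conjg P l (fst g)"
    have lgc: "lg \<in> carrier P" using lc fg by (simp add: lg_def conjg_def)
    define x where "x = (l, tL l + \<gamma> l)"
    have xe: "x = (l, tL l) \<otimes>\<^bsub>S\<^esub> e (\<gamma> l)" using lc by (subst ye) (auto simp: carS x_def)
    have cx: "conjg S x g \<in> carrier S" proof -
      have "x \<in> carrier S" using lc by (simp add: x_def carS)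
      then show ?thesis using gc by (simp add: conjg_def)
    qed
    have fcx: "fst (conjg S x g) = lg"
      using gc by (simp add: conjg_def fmult finv lg_def x_def)
    have tw: "e (twist P act \<sigma> g l) = g \<otimes>\<^bsub>S\<^esub> e (\<sigma> lg) \<otimes>\<^bsub>S\<^esub> inv\<^bsub>S\<^esub> g"
      using econj[of "inv\<^bsub>S\<^esub> g" "\<sigma> lg"] gc by (simp add: twist_def finv lg_def)
    have ze: "zeta P act \<rho> tL tH g l = g \<otimes>\<^bsub>S\<^esub> inv\<^bsub>S\<^esub> (lg, tH lg) \<otimes>\<^bsub>S\<^esub> inv\<^bsub>S\<^esub> g \<otimes>\<^bsub>S\<^esub> (l, tL l)"
      using gc by (simp add: zeta_def Let_def S_def[symmetric] lg_def conjg_def)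
    have pe: "(\<one>\<^bsub>P\<^esub>, twist P act \<sigma> g l - \<gamma> l) = e (twist P act \<sigma> g l) \<otimes>\<^bsub>S\<^esub> inv\<^bsub>S\<^esub> e (\<gamma> l)"
      unfolding einv ee by (simp add: e_def)
    have "conjg S x g \<in> CLd H tH \<sigma> \<longleftrightarrow> lg \<in> H \<and> conjg S x g = (lg, tH lg) \<otimes>\<^bsub>S\<^esub> e (\<sigma> lg)"
      using memH[OF cx] fcx by simp
    also have "conjg S x g = (lg, tH lg) \<otimes>\<^bsub>S\<^esub> e (\<sigma> lg) \<longleftrightarrow>
       (\<one>\<^bsub>P\<^esub>, twist P act \<sigma> g l - \<gamma> l) = zeta P act \<rho> tL tH g l"
      unfolding pe ze conjg_def xe
      by (rule grp_key[OF S.is_group gc _ _ ec ec tw]) (auto simp: carS lc lgc)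
    finally show ?thesis by (simp add: x_def lg_def)
  qed
  have "(\<lambda>x. conjg S x g) ` CLd L tL \<gamma> \<subseteq> CLd H tH \<sigma> \<longleftrightarrow> (\<forall>l\<in>L. conjg S (l, tL l + \<gamma> l) g \<in> CLd H tH \<sigma>)"
    by (auto simp: CLd_def)
  also have "\<dots> \<longleftrightarrow> ((\<lambda>l. conjg P l (fst g)) ` L \<subseteq> H \<and>
          (\<forall>l\<in>L. (\<one>\<^bsub>P\<^esub>, twist P act \<sigma> g l - \<gamma> l) = zeta P act \<rho> tL tH g l))"
    using key by blast
  finally show ?thesis by (simp add: S_def)
qed

end
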